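(* For every pair $1\le i<j<k$, the vector $\vec \alpha^{\{i,j\}}$ is an element of $\Lambda$.
   Context: Let $g\ge 2$, $k\ge 3$ be integers, $\mathbb Z_g$ the integers mod $g$, and $d=\binom{k}{2}(g-1)$. Index the coordinates of $\mathbb R^d$ by pairs $(\{i,j\},a)$ with $1\le i<j\le k$ and $a\in\mathbb Z_g\setminus\{0\}$. Define $Z:(\mathbb Z_g)^k\to\mathbb R^d$ by $[Z(\vec x)]_{\{i,j\},a}=1-1/g$ if $x_i-x_j=a$ and $-1/g$ otherwise. Define $\Phi(\vec\theta)=\sum_{\vec x\in(\mathbb Z_g)^k} g^{-k}e^{i\vec\theta\cdot Z(\vec x)}$ for $\vec\theta\in\mathbb R^d$, and $\Lambda=\{\vec\theta\in\mathbb R^d: |\Phi(\vec\theta)|=1\}$. Let $\mathbbm{1}_{\{i,j\},a}$ be the standard basis vector of $\mathbb R^d$ with a $1$ in coordinate $(\{i,j\},a)$. For $1\le i<j<k$ (strict inequality $j<k$) define \[ \vec \alpha^{\{i,j\}} = \sum_{n=1}^{g-1} \frac{2\pi n}{g} \mathbbm{1}_{\{i,j\},n}+ \sum_{n=1}^{g-1} \frac{2 \pi(g-n)}{g} \mathbbm{1}_{\{i,k\},n} + \sum_{n=1}^{g-1} \frac{2 \pi n}{g} \mathbbm{1}_{\{j,k\},n},\] where $n$ is an integer in $[1,g-1]$ except in the subscripts, where it denotes the corresponding element of $\mathbb Z_g$. *)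

theory Defs
  imports Complex_Main "HOL-Library.FuncSet"
begin

(* Coordinates of R^d: triples (i,j,a) with 1 <= i < j <= k and a in {1..g-1}
   (a is the canonical representative of a nonzero element of Z_g).
   Vectors of R^d are functions on triples vanishing outside this index set. *)
definition coords :: "nat \<Rightarrow> nat \<Rightarrow> (nat \<times> nat \<times> nat) set" where
  "coords g k = {(i, j, a). 1 \<le> i \<and> i < j \<and> j \<le> k \<and> 1 \<le> a \<and> a \<le> g - 1}"

(* (Z_g)^k: functions {1..k} -> {0..g-1} (representatives of Z_g) *)
definition configs :: "nat \<Rightarrow> nat \<Rightarrow> (nat \<Rightarrow> nat) set" where
  "configs g k = PiE {1..k} (\<lambda>_. {0..<g})"

definition Zvec :: "nat \<Rightarrow> (nat \<Rightarrow> nat) \<Rightarrow> nat \<times> nat \<times> nat \<Rightarrow> real" where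
  "Zvec g x c = (case c of (i, j, a) \<Rightarrow>
     (if (int (x i) - int (x j)) mod int g = int a then 1 - 1 / real g else - 1 / real g))"

definition Phi :: "nat \<Rightarrow> nat \<Rightarrow> (nat \<times> nat \<times> nat \<Rightarrow> real) \<Rightarrow> complex" where
  "Phi g k \<theta> = (\<Sum>x\<in>configs g k. complex_of_real (1 / real g ^ k) *
      exp (\<i> * complex_of_real (\<Sum>c\<in>coords g k. \<theta> c * Zvec g x c)))"

definition Lambda :: "nat \<Rightarrow> nat \<Rightarrow> (nat \<times> nat \<times> nat \<Rightarrow> real) set" where
  "Lambda g k = {\<theta>. (\<forall>c. c \<notin> coords g k \<longrightarrow> \<theta> c = 0) \<and> cmod (Phi g k \<theta>) = 1}"

definition alpha :: "nat \<Rightarrow> nat \<Rightarrow> nat \<Rightarrow> nat \<Rightarrow> nat \<times> nat \<times> nat \<Rightarrow> real" where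
  "alpha g k i j c = (case c of (p, q, n) \<Rightarrow>
     (if 1 \<le> n \<and> n \<le> g - 1 then
        (if p = i \<and> q = j then 2 * pi * real n / real g
         else if p = i \<and> q = k then 2 * pi * (real g - real n) / real g
         else if p = j \<and> q = k then 2 * pi * real n / real g
         else 0)
      else 0))"

end

theory Submission
  imports Defs
begin

lemma delta_sum:
  fixes D :: int and g :: nat and h :: "nat \<Rightarrow> real"
  assumes "g \<ge> 2"
  shows "(\<Sum>n\<in>{1..g-1}. if D mod int g = int n then h n else 0)
         = (if D mod int g = 0 then 0 else h (nat (D mod int g)))"
proof -
  have r0: "0 \<le> D mod int g" "D mod int g < int g" using assms by auto
  have "(\<Sum>n\<in>{1..g-1}. if D mod int g = int n then h n else 0)
      = (\<Sum>n\<in>{1..g-1}. if nat (D mod int g) = n then h n else 0)"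
    using r0 by (intro sum.cong) auto
  also have "\<dots> = (if nat (D mod int g) \<in> {1..g-1} then h (nat (D mod int g)) else 0)"
    by (simp add: sum.delta)
  also have "\<dots> = (if D mod int g = 0 then 0 else h (nat (D mod int g)))"
  proof -
    have "D mod int g \<noteq> 0 \<Longrightarrow> nat (D mod int g) \<in> {1..g-1}" using r0 by auto
    thus ?thesis by auto
  qed
  finally show ?thesis .
qed

lemma piece:
  fixes h :: "nat \<Rightarrow> real"
  assumes "1 \<le> p" "p < q" "q \<le> k"
  shows "(\<Sum>c\<in>coords g k. if fst c = p \<and> fst (snd c) = q then h (snd (snd c)) else 0)
         = (\<Sum>n\<in>{1..g-1}. h n)"
proof -
  have fin: "finite (coords g k)"
  proof -
    have "coords g k \<subseteq> {1..k} \<times> {1..k} \<times> {1..g-1}" unfolding coords_def by auto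
    thus ?thesis by (rule finite_subset) auto
  qed
  have "(\<Sum>c\<in>coords g k. if fst c = p \<and> fst (snd c) = q then h (snd (snd c)) else 0)
      = (\<Sum>c\<in>{c\<in>coords g k. fst c = p \<and> fst (snd c) = q}. h (snd (snd c)))"
    by (rule sum.inter_filter[symmetric, OF fin])
  also have "{c\<in>coords g k. fst c = p \<and> fst (snd c) = q} = (\<lambda>n. (p, q, n)) ` {1..g-1}"
    using assms unfolding coords_def by auto
  also have "(\<Sum>c\<in>(\<lambda>n. (p, q, n)) ` {1..g-1}. h (snd (snd c))) = (\<Sum>n\<in>{1..g-1}. h n)"
    by (subst sum.reindex) (auto simp: inj_on_def)
  finally show ?thesis .
qed

lemma splitL:
  fixes g k i j p q n :: nat and x :: "nat \<Rightarrow> nat"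
  assumes "g \<ge> 2" "1 \<le> i" "i < j" "j < k" "(p,q,n) \<in> coords g k"
  defines "H \<equiv> (\<lambda>(D::int) (cc::nat \<Rightarrow> real) n. cc n * ((if D mod int g = int n then 1 else 0) - 1 / real g))"
  shows "alpha g k i j (p,q,n) * Zvec g x (p,q,n) =
        (if p = i \<and> q = j then H (int (x i) - int (x j)) (\<lambda>n. 2 * pi * real n / real g) n else 0)
      + (if p = i \<and> q = k then H (int (x i) - int (x k)) (\<lambda>n. 2 * pi * (real g - real n) / real g) n else 0)
      + (if p = j \<and> q = k then H (int (x j) - int (x k)) (\<lambda>n. 2 * pi * real n / real g) n else 0)"
proof -
  have n: "1 \<le> n \<and> n \<le> g - 1" using assms(5) unfolding coords_def by auto
  have Z: "Zvec g x (p,q,n) = (if (int (x p) - int (x q)) mod int g = int n then 1 else 0) - 1 / real g"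
    unfolding Zvec_def by simp
  show ?thesis
  proof (cases "p = i \<and> q = j")
    case True thus ?thesis using n assms(2-4) unfolding alpha_def Z H_def by simp
  next
    case F1: False
    show ?thesis
    proof (cases "p = i \<and> q = k")
      case True thus ?thesis using n assms(2-4) unfolding alpha_def Z H_def by simp
    next
      case F2: False
      show ?thesis
      proof (cases "p = j \<and> q = k")
        case True thus ?thesis using n assms(2-4) unfolding alpha_def Z H_def by simp
      next
        case False
        have "alpha g k i j (p,q,n) = 0" using F1 F2 False unfolding alpha_def by auto
        thus ?thesis unfolding if_not_P[OF F1] if_not_P[OF F2] if_not_P[OF False] by simp
      qed
    qed
  qed
qed

theorem proposition2p8:
  fixes g k i j :: nat
  assumes "g \<ge> 2" and "k \<ge> 3" and "1 \<le> i" and "i < j" and "j < k"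
  shows "alpha g k i j \<in> Lambda g k"
proof -
  let ?a = "alpha g k i j"
  define c1 where "c1 = (\<lambda>n::nat. 2 * pi * real n / real g)"
  define c2 where "c2 = (\<lambda>n::nat. 2 * pi * (real g - real n) / real g)"
  define K0 where "K0 = (1 / real g) * ((\<Sum>n\<in>{1..g-1}. c1 n) + (\<Sum>n\<in>{1..g-1}. c2 n) + (\<Sum>n\<in>{1..g-1}. c1 n))"
  have gpos: "real g > 0" using assms by auto
  have supp: "\<forall>c. c \<notin> coords g k \<longrightarrow> ?a c = 0"
  proof (intro allI impI)
    fix c assume c: "c \<notin> coords g k"
    obtain p q n where "c = (p,q,n)" by (cases c) auto
    thus "?a c = 0" using c assms unfolding coords_def alpha_def by auto
  qed
  have key: "\<exists>m::int. (\<Sum>c\<in>coords g k. ?a c * Zvec g x c) = 2 * pi * m - K0" for x :: "nat \<Rightarrow> nat"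
  proof -
    define D1 where "D1 = int (x i) - int (x j)"
    define D2 where "D2 = int (x i) - int (x k)"
    define D3 where "D3 = int (x j) - int (x k)"
    define H where "H = (\<lambda>(D::int) (cc::nat \<Rightarrow> real) n. cc n * ((if D mod int g = int n then 1 else 0) - 1 / real g))"
    have split: "?a c * Zvec g x c =
        (if fst c = i \<and> fst (snd c) = j then H D1 c1 (snd (snd c)) else 0)
      + (if fst c = i \<and> fst (snd c) = k then H D2 c2 (snd (snd c)) else 0)
      + (if fst c = j \<and> fst (snd c) = k then H D3 c1 (snd (snd c)) else 0)"
      if "c \<in> coords g k" for c
    proof -
      obtain p q n where c: "c = (p,q,n)" by (cases c)
      show ?thesis using splitL[OF assms(1,3,4,5), of p q n x] that
        unfolding c H_def D1_def D2_def D3_def c1_def c2_def by simp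
    qed
    have Hsum: "(\<Sum>n\<in>{1..g-1}. H D cc n) = (if D mod int g = 0 then 0 else cc (nat (D mod int g)))
                 - (1 / real g) * (\<Sum>n\<in>{1..g-1}. cc n)" for D cc
    proof -
      have "(\<Sum>n\<in>{1..g-1}. H D cc n) = (\<Sum>n\<in>{1..g-1}. (if D mod int g = int n then cc n else 0) - (1/real g) * cc n)"
        unfolding H_def by (intro sum.cong) (auto simp: algebra_simps)
      also have "\<dots> = (\<Sum>n\<in>{1..g-1}. (if D mod int g = int n then cc n else 0)) - (1/real g) * (\<Sum>n\<in>{1..g-1}. cc n)"
        by (simp add: sum_subtractf sum_distrib_left)
      finally show ?thesis using delta_sum[OF assms(1)] by simp
    qed
    have S: "(\<Sum>c\<in>coords g k. ?a c * Zvec g x c)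
       = (\<Sum>n\<in>{1..g-1}. H D1 c1 n) + (\<Sum>n\<in>{1..g-1}. H D2 c2 n) + (\<Sum>n\<in>{1..g-1}. H D3 c1 n)"
    proof -
      have "(\<Sum>c\<in>coords g k. ?a c * Zvec g x c)
         = (\<Sum>c\<in>coords g k. (if fst c = i \<and> fst (snd c) = j then H D1 c1 (snd (snd c)) else 0)
      + (if fst c = i \<and> fst (snd c) = k then H D2 c2 (snd (snd c)) else 0)
      + (if fst c = j \<and> fst (snd c) = k then H D3 c1 (snd (snd c)) else 0))"
        by (rule sum.cong[OF refl split])
      also have "\<dots> = (\<Sum>c\<in>coords g k. if fst c = i \<and> fst (snd c) = j then H D1 c1 (snd (snd c)) else 0)
      + (\<Sum>c\<in>coords g k. if fst c = i \<and> fst (snd c) = k then H D2 c2 (snd (snd c)) else 0)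
      + (\<Sum>c\<in>coords g k. if fst c = j \<and> fst (snd c) = k then H D3 c1 (snd (snd c)) else 0)"
        by (simp only: sum.distrib)
      also have "\<dots> = (\<Sum>n\<in>{1..g-1}. H D1 c1 n) + (\<Sum>n\<in>{1..g-1}. H D2 c2 n) + (\<Sum>n\<in>{1..g-1}. H D3 c1 n)"
        using assms by (simp only: piece)
      finally show ?thesis .
    qed
    define r1 where "r1 = D1 mod int g"
    define r2 where "r2 = D2 mod int g"
    define r3 where "r3 = D3 mod int g"
    have r: "0 \<le> r1" "0 \<le> r2" "0 \<le> r3" using gpos unfolding r1_def r2_def r3_def by auto
    have E1: "(if r1 = 0 then 0 else c1 (nat r1)) = 2 * pi * r1 / g"
      using r unfolding c1_def by auto
    have E3: "(if r3 = 0 then 0 else c1 (nat r3)) = 2 * pi * r3 / g"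
      using r unfolding c1_def by auto
    define b :: int where "b = (if r2 = 0 then 0 else 1)"
    have E2: "(if r2 = 0 then 0 else c2 (nat r2)) = 2 * pi * b - 2 * pi * r2 / g"
      using r gpos unfolding c2_def b_def by (auto simp: field_simps)
    have "(r1 + r3 - r2) mod int g = ((r1 + r3) mod int g - r2) mod int g"
      by (simp add: mod_diff_left_eq)
    also have "\<dots> = ((D1 + D3) mod int g - r2) mod int g"
      unfolding r1_def r3_def by (simp add: mod_add_eq)
    also have "\<dots> = (D1 + D3 - D2) mod int g"
      unfolding r2_def by (simp add: mod_diff_right_eq mod_diff_left_eq)
    also have "D1 + D3 - D2 = 0" unfolding D1_def D2_def D3_def by simp
    finally have "int g dvd (r1 + r3 - r2)" by (simp add: dvd_eq_mod_eq_0)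
    then obtain t where t: "r1 + r3 - r2 = int g * t" by (auto elim: dvdE)
    have tr: "real_of_int r1 + real_of_int r3 - real_of_int r2 = real g * real_of_int t"
      using arg_cong[OF t, of real_of_int] by simp
    have "(\<Sum>c\<in>coords g k. ?a c * Zvec g x c)
        = 2 * pi * r1 / g + (2 * pi * b - 2 * pi * r2 / g) + 2 * pi * r3 / g - K0"
      unfolding S Hsum K0_def
      using E1 E2 E3 unfolding r1_def r2_def r3_def by (simp add: algebra_simps)
    also have "2 * pi * r1 / g + (2 * pi * b - 2 * pi * r2 / g) + 2 * pi * r3 / g
        = 2 * pi * (b + (r1 + r3 - r2) / g)" using gpos by (simp add: field_simps)
    also have "(r1 + r3 - r2) / g = real_of_int t" using tr gpos by (simp add: field_simps)
    finally have "(\<Sum>c\<in>coords g k. ?a c * Zvec g x c) = 2 * pi * real_of_int (b + t) - K0"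
      by simp
    thus ?thesis by blast
  qed
  have ex: "exp (\<i> * complex_of_real (\<Sum>c\<in>coords g k. ?a c * Zvec g x c)) = cis (- K0)" for x
  proof -
    obtain m :: int where m: "(\<Sum>c\<in>coords g k. ?a c * Zvec g x c) = 2 * pi * m - K0"
      using key by blast
    have "exp (\<i> * complex_of_real (\<Sum>c\<in>coords g k. ?a c * Zvec g x c)) = cis (2 * pi * m + - K0)"
      unfolding m cis_conv_exp by simp
    also have "\<dots> = cis (2 * pi * m) * cis (- K0)" by (rule cis_mult[symmetric])
    also have "cis (2 * pi * m) = 1" by simp
    finally show ?thesis by simp
  qed
  have card: "card (configs g k) = g ^ k"
    unfolding configs_def by (simp add: card_PiE)
  have "Phi g k ?a = of_nat (card (configs g k)) * (complex_of_real (1 / real g ^ k) * cis (- K0))"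
    unfolding Phi_def ex by simp
  also have "\<dots> = cis (- K0)" using gpos unfolding card by (simp add: field_simps)
  finally have "cmod (Phi g k ?a) = 1" by simp
  thus ?thesis using supp unfolding Lambda_def by blast
qed

end
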